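(* Let $d\ge1$. Then (i) $\{\beta(x,z):x\in\mathrm{dS}^d,z\in\Xi_+\}\cap\mathbb R=\{\beta(x,z):x\in\mathrm{dS}^d,z\in\Xi_-\}\cap\mathbb R=(-1,1)$; and (ii) $\mathrm{dS}^d=\partial\Xi_+\cap\partial\Xi_-$ (boundaries taken in $\mathbb C^{1+d}$).
   Context: On $\mathbb C^{1+d}$ let $\beta(z,w)=z_0w_0-z_1w_1-\dots-z_dw_d$ (complex bilinear), $V=\mathbb R^{1+d}$, $V_+=\{x\in V:x_0>0,\beta(x,x)>0\}$, $\mathrm{dS}^d_{\mathbb C}=\{z:\beta(z,z)=-1\}$, $\mathrm{dS}^d=\mathrm{dS}^d_{\mathbb C}\cap V$, and $\Xi_\pm=\mathrm{dS}^d_{\mathbb C}\cap(V\pm iV_+)$. *)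

theory Defs
  imports "HOL-Analysis.Analysis"
begin

text \<open>C^{1+d} is modelled as complex \<times> complex^'m with d = CARD('m) (so d \<ge> 1 automatically);
  the first component is the time coordinate z_0. V = R^{1+d} is real \<times> real^'m.\<close>

definition beta :: "complex \<times> (complex ^ 'm) \<Rightarrow> complex \<times> (complex ^ 'm) \<Rightarrow> complex" where
  "beta z w = fst z * fst w - (\<Sum>i\<in>UNIV. snd z $ i * snd w $ i)"

definition betaR :: "real \<times> (real ^ 'm) \<Rightarrow> real \<times> (real ^ 'm) \<Rightarrow> real" where
  "betaR x y = fst x * fst y - (\<Sum>i\<in>UNIV. snd x $ i * snd y $ i)"

definition cmk :: "real \<times> (real ^ 'm) \<Rightarrow> real \<times> (real ^ 'm) \<Rightarrow> complex \<times> (complex ^ 'm)" where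
  "cmk a b = (Complex (fst a) (fst b), \<chi> i. Complex (snd a $ i) (snd b $ i))"

definition Vreal :: "(complex \<times> (complex ^ 'm)) set" where
  "Vreal = {cmk a 0 | a. True}"

definition Vplus :: "(real \<times> (real ^ 'm)) set" where
  "Vplus = {x. fst x > 0 \<and> betaR x x > 0}"

definition dSC :: "(complex \<times> (complex ^ 'm)) set" where
  "dSC = {z. beta z z = -1}"

definition dS :: "(complex \<times> (complex ^ 'm)) set" where
  "dS = dSC \<inter> Vreal"

definition XiPlus :: "(complex \<times> (complex ^ 'm)) set" where
  "XiPlus = dSC \<inter> {cmk a b | a b. b \<in> Vplus}"

definition XiMinus :: "(complex \<times> (complex ^ 'm)) set" where
  "XiMinus = dSC \<inter> {cmk a (- b) | a b. b \<in> Vplus}"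

end

theory Submission
  imports Defs
begin

lemma betaR_inner: "betaR x y = fst x * fst y - inner (snd x) (snd y)"
  by (simp add: betaR_def inner_vec_def)

lemma beta_cmk: "beta (cmk a b) (cmk c d) = Complex (betaR a c - betaR b d) (betaR a d + betaR b c)"
  by (simp add: beta_def cmk_def betaR_def complex_eq_iff Re_sum Im_sum sum_subtractf sum.distrib algebra_simps)

definition imz :: "complex \<times> (complex ^ 'm) \<Rightarrow> real \<times> (real ^ 'm)" where
  "imz z = (Im (fst z), \<chi> i. Im (snd z $ i))"
definition rez :: "complex \<times> (complex ^ 'm) \<Rightarrow> real \<times> (real ^ 'm)" where
  "rez z = (Re (fst z), \<chi> i. Re (snd z $ i))"

lemma cmk_rez_imz: "cmk (rez z) (imz z) = z"
  by (simp add: cmk_def rez_def imz_def prod_eq_iff vec_eq_iff complex_eq_iff)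
lemma imz_cmk[simp]: "imz (cmk a b) = b" and rez_cmk[simp]: "rez (cmk a b) = a"
  by (simp_all add: cmk_def rez_def imz_def prod_eq_iff vec_eq_iff)

lemma timelike_orth:
  assumes "betaR v b = 0" "fst b > 0" "betaR b b > 0"
  shows "betaR v v \<le> 0"
proof -
  let ?s = "inner (snd b) (snd v)"
  have e: "fst b * fst v = ?s" using assms(1) by (simp add: betaR_inner inner_commute mult.commute)
  have cs: "?s^2 \<le> inner (snd b) (snd b) * inner (snd v) (snd v)" by (rule Cauchy_Schwarz_ineq)
  have bb: "inner (snd b) (snd b) < (fst b)^2" using assms(3) by (simp add: betaR_inner power2_eq_square)
  have "(fst v)^2 \<le> inner (snd v) (snd v)"
  proof (rule ccontr)
    assume "\<not> ?thesis"
    hence h: "inner (snd v) (snd v) < (fst v)^2" by simp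
    have p: "(fst v)^2 > 0" using h by (smt (verit) inner_ge_zero)
    have "inner (snd b) (snd b) * inner (snd v) (snd v) \<le> inner (snd b) (snd b) * (fst v)^2"
      using h by (simp add: mult_left_mono)
    also have "\<dots> < (fst b)^2 * (fst v)^2" using bb p by simp
    finally have "?s^2 < (fst b * fst v)^2" using cs by (simp add: power_mult_distrib)
    thus False using e by simp
  qed
  thus ?thesis by (simp add: betaR_inner power2_eq_square)
qed

lemma core:
  assumes "betaR x x = -1" "betaR x b = 0" "betaR a b = 0" "betaR a a = betaR b b - 1"
    "fst b > 0" "betaR b b > 0"
  shows "\<bar>betaR x a\<bar> < 1"
proof -
  define c where "c = betaR x a"
  define q where "q = 1 - betaR b b"
  have q1: "q < 1" using assms(6) by (simp add: q_def)
  have "betaR (x + c *\<^sub>R a) b = 0" using assms(2,3) by (simp add: betaR_inner inner_add_left algebra_simps)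
  hence "betaR (x + c *\<^sub>R a) (x + c *\<^sub>R a) \<le> 0" using timelike_orth assms(5,6) by blast
  moreover have "betaR (x + c *\<^sub>R a) (x + c *\<^sub>R a) = betaR x x + 2*c*betaR x a + c*c*betaR a a"
    by (simp add: betaR_inner inner_add_left inner_add_right inner_commute algebra_simps)
  moreover have "betaR x x + 2*c*betaR x a + c*c*betaR a a = -1 + 2*c*c - c*c*q"
    unfolding c_def q_def assms(1) assms(4) by (simp add: algebra_simps)
  ultimately have h: "c*c*(2-q) \<le> 1" by (simp add: algebra_simps)
  have "c*c < 1"
  proof (rule ccontr)
    assume "\<not> c*c<1"
    hence "c*c \<ge> 1" by simp
    moreover have "2 - q > 1" using q1 by simp
    ultimately have "c*c*(2-q) > 1*1" by (rule mult_le_less_imp_less) simp_all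
    hence "c*c*(2-q) > 1" by simp
    thus False using h by simp
  qed
  thus ?thesis unfolding c_def by (metis abs_square_less_1 power2_eq_square)
qed

lemma betaR_zero[simp]: "betaR 0 y = 0" "betaR y 0 = 0"
  by (simp_all add: betaR_inner)
lemma betaR_neg[simp]: "betaR (-x) y = - betaR x y" "betaR y (-x) = - betaR y x"
  by (simp_all add: betaR_inner)

lemma dS_E: assumes "x \<in> dS" obtains xr where "x = cmk xr 0" "betaR xr xr = -1"
proof -
  from assms obtain xr where x: "x = cmk xr 0" and "beta x x = -1"
    by (auto simp: dS_def Vreal_def dSC_def)
  hence "betaR xr xr = -1" by (simp add: beta_cmk Complex_eq_neg_1)
  with x that show ?thesis by blast
qed

lemma XiPlus_E: assumes "z \<in> XiPlus"
  obtains a b where "z = cmk a b" "fst b > 0" "betaR b b > 0" "betaR a b = 0" "betaR a a = betaR b b - 1"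
proof -
  from assms obtain a b where z: "z = cmk a b" and v: "b \<in> Vplus" and "beta z z = -1"
    by (auto simp: XiPlus_def dSC_def)
  hence "betaR a a - betaR b b = -1" "betaR a b + betaR b a = 0" by (simp_all add: beta_cmk Complex_eq_neg_1)
  hence "betaR a b = 0" "betaR a a = betaR b b - 1" by (simp_all add: betaR_inner inner_commute mult.commute)
  with z v that show ?thesis by (simp add: Vplus_def)
qed

lemma XiMinus_E: assumes "z \<in> XiMinus"
  obtains a b where "z = cmk a (-b)" "fst b > 0" "betaR b b > 0" "betaR a b = 0" "betaR a a = betaR b b - 1"
proof -
  from assms obtain a b where z: "z = cmk a (-b)" and v: "b \<in> Vplus" and "beta z z = -1"
    by (auto simp: XiMinus_def dSC_def)
  hence "betaR a a - betaR b b = -1" "betaR a b + betaR b a = 0" by (simp_all add: beta_cmk Complex_eq_neg_1)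
  hence "betaR a b = 0" "betaR a a = betaR b b - 1" by (simp_all add: betaR_inner inner_commute mult.commute)
  with z v that show ?thesis by (simp add: Vplus_def)
qed

lemma real_Complex: assumes "Complex u v \<in> range complex_of_real" "\<bar>u\<bar> < 1"
  shows "Complex u v \<in> complex_of_real ` {-1<..<1}"
proof -
  from assms(1) obtain t where "Complex u v = complex_of_real t" by auto
  hence "v = 0" "Complex u v = complex_of_real u" by (simp_all add: complex_eq_iff)
  thus ?thesis using assms(2) by (auto simp: abs_less_iff)
qed

lemma partP: "{beta x z | x z. x \<in> (dS :: (complex \<times> (complex ^ 'm)) set) \<and> z \<in> XiPlus} \<inter> range complex_of_real
           = complex_of_real ` {-1<..<1}"
proof (intro equalityI subsetI)
  fix w assume "w \<in> {beta x z | x z. x \<in> (dS :: (complex \<times> (complex ^ 'm)) set) \<and> z \<in> XiPlus} \<inter> range complex_of_real"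
  then obtain x z where w: "w = beta x z" and x: "x \<in> (dS :: (complex \<times> (complex ^ 'm)) set)"
    and z: "z \<in> XiPlus" and r: "w \<in> range complex_of_real" by blast
  obtain xr where x: "x = cmk xr 0" "betaR xr xr = -1" using dS_E[OF x] by blast
  obtain a b where z: "z = cmk a b" "fst b > 0" "betaR b b > 0" "betaR a b = 0" "betaR a a = betaR b b - 1"
    using XiPlus_E[OF z] by blast
  have w': "w = Complex (betaR xr a) (betaR xr b)" using w x z by (simp add: beta_cmk)
  hence "betaR xr b = 0" using r by (auto simp: complex_eq_iff)
  hence "\<bar>betaR xr a\<bar> < 1" using core[of xr b a] x z by simp
  thus "w \<in> complex_of_real ` {-1<..<1}" using real_Complex r w' by simp
next
  fix w assume "w \<in> complex_of_real ` {-1<..<1}"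
  then obtain r where w: "w = complex_of_real r" and r: "-1 < r" "r < 1" by auto
  obtain i0 :: 'm where True by blast
  define e :: "real^'m" where "e = axis i0 1"
  define t where "t = sqrt (1 - r^2)"
  have r2: "r^2 < 1" using r by (simp add: abs_square_less_1)
  have t: "t > 0" "t^2 = 1 - r^2" using r2 by (simp_all add: t_def)
  have ee: "inner e e = 1" by (simp add: e_def)
  define x where "x = cmk ((0::real), e) (0::real \<times> (real^'m))"
  define z where "z = cmk ((0::real), (-r) *\<^sub>R e) (t, 0::real^'m)"
  have "x \<in> dS" unfolding x_def dS_def dSC_def Vreal_def using ee by (auto simp: beta_cmk betaR_inner Complex_eq_neg_1)
  moreover have "(t, 0::real^'m) \<in> Vplus" using t by (simp add: Vplus_def betaR_inner)
  moreover have "beta z z = -1" unfolding z_def using ee t by (simp add: beta_cmk betaR_inner power2_eq_square Complex_eq_neg_1)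
  ultimately have "x \<in> dS" "z \<in> XiPlus" unfolding XiPlus_def dSC_def z_def by auto
  moreover have "beta x z = w" unfolding x_def z_def w using ee by (simp add: beta_cmk betaR_inner complex_eq_iff)
  ultimately show "w \<in> {beta x z | x z. x \<in> (dS :: (complex \<times> (complex ^ 'm)) set) \<and> z \<in> XiPlus} \<inter> range complex_of_real"
    using w by blast
qed

lemma partM: "{beta x z | x z. x \<in> (dS :: (complex \<times> (complex ^ 'm)) set) \<and> z \<in> XiMinus} \<inter> range complex_of_real
           = complex_of_real ` {-1<..<1}"
proof (intro equalityI subsetI)
  fix w assume "w \<in> {beta x z | x z. x \<in> (dS :: (complex \<times> (complex ^ 'm)) set) \<and> z \<in> XiMinus} \<inter> range complex_of_real"
  then obtain x z where w: "w = beta x z" and x: "x \<in> (dS :: (complex \<times> (complex ^ 'm)) set)"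
    and z: "z \<in> XiMinus" and r: "w \<in> range complex_of_real" by blast
  obtain xr where x: "x = cmk xr 0" "betaR xr xr = -1" using dS_E[OF x] by blast
  obtain a b where z: "z = cmk a (-b)" "fst b > 0" "betaR b b > 0" "betaR a b = 0" "betaR a a = betaR b b - 1"
    using XiMinus_E[OF z] by blast
  have w': "w = Complex (betaR xr a) (- betaR xr b)" using w x z by (simp add: beta_cmk)
  hence "betaR xr b = 0" using r by (auto simp: complex_eq_iff)
  hence "\<bar>betaR xr a\<bar> < 1" using core[of xr b a] x z by simp
  thus "w \<in> complex_of_real ` {-1<..<1}" using real_Complex r w' by simp
next
  fix w assume "w \<in> complex_of_real ` {-1<..<1}"
  then obtain r where w: "w = complex_of_real r" and r: "-1 < r" "r < 1" by auto
  obtain i0 :: 'm where True by blast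
  define e :: "real^'m" where "e = axis i0 1"
  define t where "t = sqrt (1 - r^2)"
  have r2: "r^2 < 1" using r by (simp add: abs_square_less_1)
  have t: "t > 0" "t^2 = 1 - r^2" using r2 by (simp_all add: t_def)
  have ee: "inner e e = 1" by (simp add: e_def)
  define x where "x = cmk ((0::real), e) (0::real \<times> (real^'m))"
  define z where "z = cmk ((0::real), (-r) *\<^sub>R e) (- (t, 0::real^'m))"
  have "x \<in> dS" unfolding x_def dS_def dSC_def Vreal_def using ee by (auto simp: beta_cmk betaR_inner Complex_eq_neg_1)
  moreover have "(t, 0::real^'m) \<in> Vplus" using t by (simp add: Vplus_def betaR_inner)
  moreover have "beta z z = -1" unfolding z_def using ee t by (simp add: beta_cmk betaR_inner power2_eq_square Complex_eq_neg_1)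
  moreover have "z = cmk ((0::real), (-r) *\<^sub>R e) (- (t, 0::real^'m))" by (rule z_def)
  ultimately have "x \<in> dS" "z \<in> XiMinus" unfolding XiMinus_def dSC_def by blast+
  moreover have "beta x z = w" unfolding x_def z_def w using ee by (simp add: beta_cmk betaR_inner complex_eq_iff)
  ultimately show "w \<in> {beta x z | x z. x \<in> (dS :: (complex \<times> (complex ^ 'm)) set) \<and> z \<in> XiMinus} \<inter> range complex_of_real"
    using w by blast
qed

lemma tendsto_cmk:
  assumes "(A \<longlongrightarrow> a) F" "(B \<longlongrightarrow> b) F"
  shows "((\<lambda>n. cmk (A n) (B n)) \<longlongrightarrow> cmk a b) F"
  unfolding cmk_def
proof (intro tendsto_Pair vec_tendstoI)
  show "((\<lambda>n. Complex (fst (A n)) (fst (B n))) \<longlongrightarrow> Complex (fst a) (fst b)) F"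
    unfolding Complex_eq using assms by (intro tendsto_intros)
  fix i
  show "((\<lambda>n. (\<chi> i. Complex (snd (A n) $ i) (snd (B n) $ i)) $ i) \<longlongrightarrow> (\<chi> i. Complex (snd a $ i) (snd b $ i)) $ i) F"
    unfolding Complex_eq vec_lambda_beta using assms by (intro tendsto_intros)
qed

lemma closed_dSC: "closed dSC"
  unfolding dSC_def beta_def by (intro closed_Collect_eq continuous_intros)

lemma closure_XiPlus: "closure XiPlus \<subseteq> dSC \<inter> {z. 0 \<le> Im (fst z) \<and> 0 \<le> Im (fst z)^2 - (\<Sum>i\<in>UNIV. (Im (snd z $ i))^2)}"
proof (rule closure_minimal)
  show "closed (dSC \<inter> {z::complex \<times> (complex^'m). 0 \<le> Im (fst z) \<and> 0 \<le> Im (fst z)^2 - (\<Sum>i\<in>UNIV. (Im (snd z $ i))^2)})"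
    using closed_dSC by (intro closed_Int closed_Collect_conj closed_Collect_le continuous_intros)
  show "XiPlus \<subseteq> dSC \<inter> {z::complex \<times> (complex^'m). 0 \<le> Im (fst z) \<and> 0 \<le> Im (fst z)^2 - (\<Sum>i\<in>UNIV. (Im (snd z $ i))^2)}"
  proof
    fix z :: "complex \<times> (complex^'m)" assume z: "z \<in> XiPlus"
    then obtain a b where "z = cmk a b" "fst b > 0" "betaR b b > 0" by (rule XiPlus_E)
    with z show "z \<in> dSC \<inter> {z. 0 \<le> Im (fst z) \<and> 0 \<le> Im (fst z)^2 - (\<Sum>i\<in>UNIV. (Im (snd z $ i))^2)}"
      by (simp add: XiPlus_def cmk_def betaR_def power2_eq_square)
  qed
qed

lemma closure_XiMinus: "closure XiMinus \<subseteq> dSC \<inter> {z. Im (fst z) \<le> 0 \<and> 0 \<le> Im (fst z)^2 - (\<Sum>i\<in>UNIV. (Im (snd z $ i))^2)}"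
proof (rule closure_minimal)
  show "closed (dSC \<inter> {z::complex \<times> (complex^'m). Im (fst z) \<le> 0 \<and> 0 \<le> Im (fst z)^2 - (\<Sum>i\<in>UNIV. (Im (snd z $ i))^2)})"
    using closed_dSC by (intro closed_Int closed_Collect_conj closed_Collect_le continuous_intros)
  show "XiMinus \<subseteq> dSC \<inter> {z::complex \<times> (complex^'m). Im (fst z) \<le> 0 \<and> 0 \<le> Im (fst z)^2 - (\<Sum>i\<in>UNIV. (Im (snd z $ i))^2)}"
  proof
    fix z :: "complex \<times> (complex^'m)" assume z: "z \<in> XiMinus"
    then obtain a b where "z = cmk a (-b)" "fst b > 0" "betaR b b > 0" by (rule XiMinus_E)
    with z show "z \<in> dSC \<inter> {z. Im (fst z) \<le> 0 \<and> 0 \<le> Im (fst z)^2 - (\<Sum>i\<in>UNIV. (Im (snd z $ i))^2)}"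
      by (simp add: XiMinus_def cmk_def betaR_def power2_eq_square)
  qed
qed

lemma front_sub: "frontier XiPlus \<inter> frontier XiMinus \<subseteq> (dS :: (complex \<times> (complex ^ 'm)) set)"
proof
  fix z :: "complex \<times> (complex ^ 'm)" assume "z \<in> frontier XiPlus \<inter> frontier XiMinus"
  hence "z \<in> closure XiPlus" "z \<in> closure XiMinus" by (auto simp: frontier_def)
  hence z: "z \<in> dSC" "Im (fst z) = 0" "0 \<le> - (\<Sum>i\<in>UNIV. (Im (snd z $ i))^2)"
    using closure_XiPlus closure_XiMinus by force+
  have "(\<Sum>i\<in>UNIV. (Im (snd z $ i))^2) = 0"
    using z(3) sum_nonneg[of UNIV "\<lambda>i. (Im (snd z $ i))^2"] by simp
  hence "\<forall>i. Im (snd z $ i) = 0" by (simp add: sum_nonneg_eq_0_iff)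
  hence "imz z = 0" using z(2) by (simp add: imz_def prod_eq_iff vec_eq_iff)
  hence "z = cmk (rez z) 0" using cmk_rez_imz[of z] by simp
  hence "z \<in> Vreal" unfolding Vreal_def by blast
  thus "z \<in> dS" using z(1) by (simp add: dS_def)
qed

lemma betaR_scale[simp]: "betaR (c *\<^sub>R x) y = c * betaR x y" "betaR y (c *\<^sub>R x) = c * betaR y x"
  by (simp_all add: betaR_inner algebra_simps)

lemma approx_mem:
  assumes "betaR xr xr = -1" "betaR u xr = 0" "betaR u u = 1" "fst u > 0" "0 < t" "t \<le> 1"
  shows "cmk (sqrt (1 - t^2) *\<^sub>R xr) (t *\<^sub>R u) \<in> XiPlus"
    "cmk (sqrt (1 - t^2) *\<^sub>R xr) (- (t *\<^sub>R u)) \<in> XiMinus"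
proof -
  have t2: "t^2 \<le> 1" using assms(5,6) by (simp add: power_le_one)
  have s: "sqrt (1 - t^2) * sqrt (1 - t^2) = 1 - t^2" using t2 by simp
  have t2': "\<bar>1 - t*t\<bar> = 1 - t*t" using t2 by (simp add: power2_eq_square)
  have ux: "betaR xr u = 0" using assms(2) by (simp add: betaR_inner inner_commute mult.commute)
  have v: "t *\<^sub>R u \<in> Vplus" using assms by (simp add: Vplus_def)
  have "beta (cmk (sqrt (1 - t^2) *\<^sub>R xr) (t *\<^sub>R u)) (cmk (sqrt (1 - t^2) *\<^sub>R xr) (t *\<^sub>R u)) = -1"
    using assms ux t2' by (simp add: beta_cmk Complex_eq_neg_1 mult.assoc[symmetric] s power2_eq_square)
  thus "cmk (sqrt (1 - t^2) *\<^sub>R xr) (t *\<^sub>R u) \<in> XiPlus" using v unfolding XiPlus_def dSC_def by blast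
  have "beta (cmk (sqrt (1 - t^2) *\<^sub>R xr) (- (t *\<^sub>R u))) (cmk (sqrt (1 - t^2) *\<^sub>R xr) (- (t *\<^sub>R u))) = -1"
    using assms ux t2' by (simp add: beta_cmk Complex_eq_neg_1 mult.assoc[symmetric] s power2_eq_square)
  thus "cmk (sqrt (1 - t^2) *\<^sub>R xr) (- (t *\<^sub>R u)) \<in> XiMinus" using v unfolding XiMinus_def dSC_def by blast
qed

lemma dS_sub: "(dS :: (complex \<times> (complex ^ 'm)) set) \<subseteq> frontier XiPlus \<inter> frontier XiMinus"
proof
  fix x :: "complex \<times> (complex ^ 'm)" assume x: "x \<in> dS"
  obtain xr where x': "x = cmk xr 0" "betaR xr xr = -1" using dS_E[OF x] by blast
  define n where "n = norm (snd xr)"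
  have nn: "inner (snd xr) (snd xr) = n^2" by (simp add: n_def power2_norm_eq_inner)
  have n2: "n^2 = 1 + (fst xr)^2" using x'(2) nn by (simp add: betaR_inner power2_eq_square)
  have npos: "n > 0" using n2 n_def by (metis add_pos_nonneg norm_ge_zero order_less_le power_zero_numeral zero_less_one zero_le_power2)
  define u where "u = (n, (fst xr / n) *\<^sub>R snd xr)"
  have u1: "betaR u xr = 0" using npos nn by (simp add: u_def betaR_inner power2_eq_square)
  have "betaR u u = n^2 - (fst xr / n)^2 * n^2" by (simp add: u_def betaR_inner nn power2_eq_square)
  also have "\<dots> = n^2 - (fst xr)^2" using npos by (simp add: power_divide)
  finally have u2: "betaR u u = 1" using n2 by simp
  have u3: "fst u > 0" using npos by (simp add: u_def)
  define s where "s = (\<lambda>k::nat. inverse (real (Suc k)))"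
  have s0: "s \<longlonglongrightarrow> 0" unfolding s_def by (rule LIMSEQ_inverse_real_of_nat)
  have sp: "0 < s k" "s k \<le> 1" for k by (simp_all add: s_def inverse_le_1_iff)
  have lim1: "(\<lambda>k. sqrt (1 - (s k)^2) *\<^sub>R xr) \<longlonglongrightarrow> xr"
  proof -
    have "(\<lambda>k. sqrt (1 - (s k)^2) *\<^sub>R xr) \<longlonglongrightarrow> sqrt (1 - 0^2) *\<^sub>R xr"
      by (intro tendsto_intros s0)
    thus ?thesis by simp
  qed
  have lim2: "(\<lambda>k. s k *\<^sub>R u) \<longlonglongrightarrow> 0"
    using tendsto_scaleR[OF s0 tendsto_const[of u]] by simp
  have lim3: "(\<lambda>k. - (s k *\<^sub>R u)) \<longlonglongrightarrow> 0"
    using tendsto_minus[OF lim2] by simp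
  have "x \<in> closure XiPlus" unfolding closure_sequential x'(1)
    apply (rule exI[where x="\<lambda>k. cmk (sqrt (1 - (s k)^2) *\<^sub>R xr) (s k *\<^sub>R u)"])
    using approx_mem(1)[OF x'(2) u1 u2 u3 sp] tendsto_cmk[OF lim1 lim2] by simp
  moreover have "x \<in> closure XiMinus" unfolding closure_sequential x'(1)
    apply (rule exI[where x="\<lambda>k. cmk (sqrt (1 - (s k)^2) *\<^sub>R xr) (- (s k *\<^sub>R u))"])
    using approx_mem(2)[OF x'(2) u1 u2 u3 sp] tendsto_cmk[OF lim1 lim3] by simp
  moreover have "x \<notin> XiPlus"
  proof
    assume "x \<in> XiPlus"
    then obtain a b where "x = cmk a b" "fst b > 0" by (rule XiPlus_E)
    thus False using x'(1) by (metis imz_cmk fst_zero less_irrefl)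
  qed
  moreover have "x \<notin> XiMinus"
  proof
    assume "x \<in> XiMinus"
    then obtain a b where "x = cmk a (-b)" "fst b > 0" by (rule XiMinus_E)
    hence "imz x = -b" by simp
    hence "b = 0" using x'(1) by simp
    thus False using \<open>fst b > 0\<close> by simp
  qed
  ultimately show "x \<in> frontier XiPlus \<inter> frontier XiMinus"
    using interior_subset by (auto simp: frontier_def)
qed

theorem mainTheorem20:
  shows "({beta x z | x z. x \<in> (dS :: (complex \<times> (complex ^ 'm)) set) \<and> z \<in> XiPlus} \<inter> range complex_of_real
           = complex_of_real ` {-1<..<1}
        \<and> {beta x z | x z. x \<in> (dS :: (complex \<times> (complex ^ 'm)) set) \<and> z \<in> XiMinus} \<inter> range complex_of_real
           = complex_of_real ` {-1<..<1})
      \<and> (dS :: (complex \<times> (complex ^ 'm)) set) = frontier XiPlus \<inter> frontier XiMinus"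
  using partP partM dS_sub front_sub by blast

end
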